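(* Let $\Omega\subset\mathbb{R}^2$ be open and bounded with Lipschitz boundary, let $f\in L^\infty(\Omega)$, $\lambda_1,\lambda_2>0$, and let $$\mathcal{A}=\{u\in L^1(\Omega):\ \log u\in L^1(\Omega)\},\qquad \mathcal{B}=\{v\in L^2(\Omega):\ v\le f \text{ a.e.}\}.$$ Let $u\in BV(\Omega)\cap\mathcal{A}$. Then the minimisation problem $$\inf_{v\in L^2(\Omega)\cap\mathcal{B}}\Big\{\frac{\lambda_1}{2}\|v\|_{L^2(\Omega)}^2+\lambda_2\, D_{KL}(f-v,u)\Big\}$$ admits a minimiser, and this minimiser is unique.
   Context: For nonnegative $\varphi,\psi\in L^1(\Omega)$ the Kullback–Leibler functional is $D_{KL}(\varphi,\psi)=\int_\Omega\big(\psi-\varphi+\varphi\log(\varphi/\psi)\big)\,dx\in[0,+\infty]$, with the convention $0\log 0=0$. Note that $u\in\mathcal{A}$ forces $u\ge 0$ a.e. (so that $\log u$ is defined). $BV(\Omega)$ denotes the space of functions of bounded variation. *)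

theory Defs
  imports "HOL-Analysis.Analysis"
begin

definition Lp2 :: "(real^2) set \<Rightarrow> (real^2 \<Rightarrow> real) \<Rightarrow> bool" where
  "Lp2 \<Omega> v \<longleftrightarrow> v \<in> borel_measurable (lebesgue_on \<Omega>) \<and> integrable (lebesgue_on \<Omega>) (\<lambda>x. (v x)^2)"

definition Linfty :: "(real^2) set \<Rightarrow> (real^2 \<Rightarrow> real) \<Rightarrow> bool" where
  "Linfty \<Omega> f \<longleftrightarrow> f \<in> borel_measurable (lebesgue_on \<Omega>) \<and> (\<exists>C. AE x in lebesgue_on \<Omega>. \<bar>f x\<bar> \<le> C)"

definition lipschitz_boundary :: "(real^2) set \<Rightarrow> bool" where
  "lipschitz_boundary \<Omega> \<longleftrightarrow>
    (\<forall>p\<in>frontier \<Omega>. \<exists>r>0. \<exists>R g L. orthogonal_transformation (R :: real^2 \<Rightarrow> real^2) \<and> L-lipschitz_on UNIV (g :: real \<Rightarrow> real) \<and>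
        (\<forall>x\<in>ball p r. x \<in> \<Omega> \<longleftrightarrow> (R x) $ 2 < g ((R x) $ 1)))"

definition test_field :: "(real^2) set \<Rightarrow> (real^2 \<Rightarrow> real^2) \<Rightarrow> (real^2 \<Rightarrow> real^2^2) \<Rightarrow> bool" where
  "test_field \<Omega> \<phi> D \<longleftrightarrow>
     (\<forall>x. (\<phi> has_derivative (\<lambda>h. D x *v h)) (at x)) \<and> continuous_on UNIV D \<and>
     compact (closure {x. \<phi> x \<noteq> 0}) \<and> closure {x. \<phi> x \<noteq> 0} \<subseteq> \<Omega> \<and> (\<forall>x. norm (\<phi> x) \<le> 1)"

definition divergence :: "(real^2 \<Rightarrow> real^2^2) \<Rightarrow> real^2 \<Rightarrow> real" where
  "divergence D x = (\<Sum>i\<in>UNIV. D x $ i $ i)"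

definition total_variation :: "(real^2) set \<Rightarrow> (real^2 \<Rightarrow> real) \<Rightarrow> ereal" where
  "total_variation \<Omega> u =
     (SUP (\<phi>, D)\<in>{(\<phi>, D). test_field \<Omega> \<phi> D}.
        ereal (integral\<^sup>L (lebesgue_on \<Omega>) (\<lambda>x. u x * divergence D x)))"

definition BV :: "(real^2) set \<Rightarrow> (real^2 \<Rightarrow> real) \<Rightarrow> bool" where
  "BV \<Omega> u \<longleftrightarrow> integrable (lebesgue_on \<Omega>) u \<and> total_variation \<Omega> u < \<infinity>"

text \<open>The class A: u in L^1, u > 0 a.e. (so log u is defined), log u in L^1.\<close>
definition A_class :: "(real^2) set \<Rightarrow> (real^2 \<Rightarrow> real) \<Rightarrow> bool" where
  "A_class \<Omega> u \<longleftrightarrow> integrable (lebesgue_on \<Omega>) u \<and> (AE x in lebesgue_on \<Omega>. u x > 0)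
      \<and> integrable (lebesgue_on \<Omega>) (\<lambda>x. ln (u x))"

definition B_class :: "(real^2) set \<Rightarrow> (real^2 \<Rightarrow> real) \<Rightarrow> (real^2 \<Rightarrow> real) \<Rightarrow> bool" where
  "B_class \<Omega> f v \<longleftrightarrow> Lp2 \<Omega> v \<and> (AE x in lebesgue_on \<Omega>. v x \<le> f x)"

text \<open>Pointwise KL integrand for nonnegative a (= phi) and b (= psi), with 0 log 0 = 0
  and value +infinity when a > 0 = b.\<close>
definition kl_pt :: "real \<Rightarrow> real \<Rightarrow> ennreal" where
  "kl_pt a b = (if a = 0 then ennreal b else if b = 0 then \<infinity>
                else ennreal (b - a + a * ln (a / b)))"

definition D_KL :: "(real^2) set \<Rightarrow> (real^2 \<Rightarrow> real) \<Rightarrow> (real^2 \<Rightarrow> real) \<Rightarrow> ennreal" where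
  "D_KL \<Omega> \<phi> \<psi> = (\<integral>\<^sup>+ x. kl_pt (\<phi> x) (\<psi> x) \<partial>lebesgue_on \<Omega>)"

definition objective :: "(real^2) set \<Rightarrow> (real^2 \<Rightarrow> real) \<Rightarrow> (real^2 \<Rightarrow> real) \<Rightarrow> real \<Rightarrow> real
     \<Rightarrow> (real^2 \<Rightarrow> real) \<Rightarrow> ennreal" where
  "objective \<Omega> f u lam1 lam2 v =
     ennreal (lam1 / 2 * integral\<^sup>L (lebesgue_on \<Omega>) (\<lambda>x. (v x)^2))
     + ennreal lam2 * D_KL \<Omega> (\<lambda>x. f x - v x) u"

end

theory Submission
  imports Defs
begin

definition klr :: "real \<Rightarrow> real \<Rightarrow> real" where
  "klr s b = (if s = 0 then b else b - s + s * ln (s / b))"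

lemma kl_pt_eq: "s \<ge> 0 \<Longrightarrow> b > 0 \<Longrightarrow> kl_pt s b = ennreal (klr s b)"
  by (simp add: kl_pt_def klr_def)

lemma klr_tangent:
  assumes b: "b > 0" and ss: "ss > 0" and s: "s \<ge> 0"
  shows "klr s b \<ge> klr ss b + ln (ss / b) * (s - ss)"
proof (cases "s = 0")
  case True
  then show ?thesis using ss b by (simp add: klr_def algebra_simps)
next
  case False
  hence sp: "s > 0" using s by simp
  have l: "ln (ss / s) \<le> ss / s - 1" using ss sp by (intro ln_le_minus_one) simp
  have e1: "ln (s / b) - ln (ss / b) = - ln (ss / s)"
    using sp ss b by (simp add: ln_div)
  have "s * (ln (s / b) - ln (ss / b)) \<ge> s - ss"
  proof -
    have "s * (ln (s / b) - ln (ss / b)) = - s * ln (ss / s)" using e1 by simp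
    also have "\<dots> \<ge> - s * (ss / s - 1)" using l sp by (simp add: mult_left_mono)
    also have "- s * (ss / s - 1) = s - ss" using sp by (simp add: field_simps)
    finally show ?thesis by simp
  qed
  then show ?thesis using False ss by (simp add: klr_def algebra_simps)
qed

lemma klr_nonneg: assumes "b > 0" "s \<ge> 0" shows "klr s b \<ge> 0"
proof -
  have "klr s b \<ge> klr b b + ln (b / b) * (s - b)" using klr_tangent[OF assms(1) assms(1) assms(2)] .
  thus ?thesis using assms by (simp add: klr_def)
qed

definition psi :: "real \<Rightarrow> real \<Rightarrow> real \<Rightarrow> real" where
  "psi l1 l2 y = (THE s. 0 < s \<and> l1 * s + l2 * ln s = y)"

lemma phi_strict: fixes l1 l2 s t :: real assumes a: "l1 > 0" "l2 > 0" "0 < s" "s < t" shows "l1 * s + l2 * ln s < l1 * t + l2 * ln t"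
proof -
  have "l1 * s < l1 * t" by (metis a(1) a(4) mult_strict_left_mono)
  moreover have "ln s < ln t" using a by simp
  hence "l2 * ln s < l2 * ln t" using a by simp
  ultimately show ?thesis by linarith
qed

lemma psi_prop:
  assumes l1: "l1 > 0" and l2: "l2 > 0"
  shows "psi l1 l2 y > 0 \<and> l1 * psi l1 l2 y + l2 * ln (psi l1 l2 y) = y"
proof -
  define s2 where "s2 = max 1 (y / l1 + 1)"
  define s1 where "s1 = min 1 (exp ((y - l1) / l2 - 1))"
  have s1p: "s1 > 0" unfolding s1_def by simp
  have s12: "s1 \<le> s2" unfolding s1_def s2_def by simp
  have "l1 * s2 + l2 * ln s2 \<ge> l1 * s2" unfolding s2_def using l2 by simp
  moreover have "l1 * s2 > y"
  proof -
    have "l1 * s2 \<ge> l1 * (y / l1 + 1)" unfolding s2_def using l1 by (simp add: mult_left_mono)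
    also have "l1 * (y / l1 + 1) = y + l1" using l1 by (simp add: field_simps)
    finally show ?thesis using l1 by simp
  qed
  ultimately have hi: "l1 * s2 + l2 * ln s2 \<ge> y" by simp
  have A: "l1 * s1 \<le> l1" unfolding s1_def using l1 by simp
  have "ln s1 \<le> (y - l1) / l2 - 1" unfolding s1_def
    by (metis exp_gt_zero ln_exp ln_le_cancel_iff min.cobounded2 min_def s1_def s1p)
  hence "l2 * ln s1 \<le> l2 * ((y - l1) / l2 - 1)" using l2 by (simp add: mult_left_mono)
  moreover have "l2 * ((y - l1) / l2 - 1) = y - l1 - l2" using l2 by (simp add: field_simps)
  ultimately have "l2 * ln s1 \<le> y - l1 - l2" by linarith
  with A have lo: "l1 * s1 + l2 * ln s1 \<le> y" using l2 by simp
  have cont: "\<forall>x. s1 \<le> x \<and> x \<le> s2 \<longrightarrow> isCont (\<lambda>s. l1 * s + l2 * ln s) x"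
    using s1p by (auto intro!: continuous_intros)
  obtain s where s: "s1 \<le> s" "s \<le> s2" "l1 * s + l2 * ln s = y"
    using IVT[of "\<lambda>s. l1 * s + l2 * ln s" s1 y s2, OF lo hi s12 cont] by blast
  have ex: "0 < s \<and> l1 * s + l2 * ln s = y" using s s1p by simp
  have "psi l1 l2 y = s" unfolding psi_def
  proof (rule the_equality)
    fix t assume t: "0 < t \<and> l1 * t + l2 * ln t = y"
    show "t = s"
    proof (rule ccontr)
      assume "t \<noteq> s"
      then consider "t < s" | "s < t" by linarith
      then show False
      proof cases
        case 1 thus False using phi_strict[OF l1 l2, of t s] t ex by linarith
      next
        case 2 thus False using phi_strict[OF l1 l2, of s t] t ex by linarith
      qed
    qed
  qed (use ex in auto)
  thus ?thesis using ex by simp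
qed

lemma psi_mono: assumes l1: "l1 > 0" and l2: "l2 > 0" shows "mono (psi l1 l2)"
proof (rule monoI, rule ccontr)
  fix x y :: real assume xy: "x \<le> y" and "\<not> psi l1 l2 x \<le> psi l1 l2 y"
  hence "psi l1 l2 y < psi l1 l2 x" by simp
  from phi_strict[OF l1 l2 _ this] psi_prop[OF l1 l2, of x] psi_prop[OF l1 l2, of y] xy
  show False by linarith
qed

lemma pointwise:
  assumes l1: "l1 > 0" and l2: "l2 > 0" and b: "b > 0" and t: "t \<le> a"
  defines "ts \<equiv> a - psi l1 l2 (l1 * a + l2 * ln b)"
  shows "l1 / 2 * t^2 + l2 * klr (a - t) b \<ge> l1 / 2 * ts^2 + l2 * klr (a - ts) b + l1 / 2 * (t - ts)^2"
proof -
  define ss where "ss = psi l1 l2 (l1 * a + l2 * ln b)"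
  have ss: "ss > 0" "l1 * ss + l2 * ln ss = l1 * a + l2 * ln b"
    using psi_prop[OF l1 l2] unfolding ss_def by auto
  have tsd: "ts = a - ss" unfolding ts_def ss_def by simp
  have "ln (ss / b) = ln ss - ln b" using ss b by (simp add: ln_div)
  also have "\<dots> = l1 * ts / l2"
  proof -
    have "l1 * ts = l1 * a - l1 * ss" by (simp add: tsd right_diff_distrib)
    hence "l2 * (ln ss - ln b) = l1 * ts" using ss(2) by (simp add: algebra_simps)
    thus ?thesis using l2 by (simp add: field_simps)
  qed
  finally have lnq: "ln (ss / b) = l1 * ts / l2" .
  have k: "klr (a - t) b \<ge> klr ss b + (l1 * ts / l2) * (ts - t)"
  proof -
    have e2: "a - t - ss = ts - t" using tsd by simp
    have "klr (a - t) b \<ge> klr ss b + ln (ss / b) * (a - t - ss)"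
      using klr_tangent[OF b ss(1), of "a - t"] t by simp
    thus ?thesis by (simp only: lnq e2)
  qed
  have "l2 * klr (a - t) b \<ge> l2 * (klr ss b + (l1 * ts / l2) * (ts - t))"
    using mult_left_mono[OF k, of l2] l2 by simp
  moreover have "l2 * (klr ss b + (l1 * ts / l2) * (ts - t)) = l2 * klr ss b + l1 * ts * (ts - t)"
    using l2 by (simp add: field_simps)
  ultimately have "l2 * klr (a - t) b \<ge> l2 * klr ss b + l1 * ts * (ts - t)" by simp
  moreover have "l1 / 2 * t^2 = l1 / 2 * ts^2 + l1 * ts * (t - ts) + l1 / 2 * (t - ts)^2"
    by (simp add: power2_eq_square algebra_simps)
  moreover have "l2 * klr (a - ts) b = l2 * klr ss b" using tsd by simp
  moreover have "l1 * ts * (t - ts) = - (l1 * ts * (ts - t))" by (simp add: algebra_simps)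
  ultimately show ?thesis by linarith
qed


lemma kl_meas[measurable]:
  assumes [measurable]: "f \<in> borel_measurable M" "g \<in> borel_measurable M"
  shows "(\<lambda>x. kl_pt (f x) (g x)) \<in> borel_measurable M"
  unfolding kl_pt_def by measurable

lemma psi_meas[measurable]: "l1 > 0 \<Longrightarrow> l2 > 0 \<Longrightarrow> psi l1 l2 \<in> borel_measurable borel"
  by (rule borel_measurable_mono) (rule psi_mono)

lemma lmeas: "open (S :: (real^2) set) \<Longrightarrow> bounded S \<Longrightarrow> S \<in> lmeasurable"
  by (simp add: bounded_set_imp_lmeasurable borel_open)

definition Ep :: "real \<Rightarrow> real \<Rightarrow> real \<Rightarrow> real \<Rightarrow> real \<Rightarrow> ennreal" where
  "Ep l1 l2 a b t = ennreal (l1 / 2 * t^2) + ennreal l2 * kl_pt (a - t) b"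

lemma Ep_eq:
  assumes "l1 > 0" "l2 > 0" "b > 0" "t \<le> a"
  shows "Ep l1 l2 a b t = ennreal (l1 / 2 * t^2 + l2 * klr (a - t) b)"
  using assms klr_nonneg[of b "a - t"]
  by (simp add: Ep_def kl_pt_eq ennreal_plus ennreal_mult)

lemma Ep_key:
  assumes l1: "l1 > 0" and l2: "l2 > 0" and b: "b > 0" and t: "t \<le> a"
  defines "ts \<equiv> a - psi l1 l2 (l1 * a + l2 * ln b)"
  shows "Ep l1 l2 a b ts + ennreal (l1 / 2 * (t - ts)^2) \<le> Ep l1 l2 a b t"
proof -
  have tsa: "ts \<le> a" unfolding ts_def using psi_prop[OF l1 l2] by (simp add: less_imp_le)
  have "Ep l1 l2 a b ts + ennreal (l1 / 2 * (t - ts)^2)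
      = ennreal (l1 / 2 * ts^2 + l2 * klr (a - ts) b + l1 / 2 * (t - ts)^2)"
    using Ep_eq[OF l1 l2 b tsa] l1 l2 b klr_nonneg[of b "a - ts"] tsa
    by (simp add: ennreal_plus)
  also have "\<dots> \<le> ennreal (l1 / 2 * t^2 + l2 * klr (a - t) b)"
    using pointwise[OF l1 l2 b t] unfolding ts_def by (rule ennreal_leI)
  also have "\<dots> = Ep l1 l2 a b t" using Ep_eq[OF l1 l2 b t] by simp
  finally show ?thesis .
qed

lemma Ep_key2:
  assumes l1: "l1 > 0" and l2: "l2 > 0" and b: "b > 0" and t: "t \<le> a"
  shows "Ep l1 l2 a b (a - psi l1 l2 (l1 * a + l2 * ln b)) \<le> Ep l1 l2 a b t"
  using Ep_key[OF assms] by (meson add_increasing2 order.trans zero_le order_refl)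

lemma Ep_bound:
  assumes l1: "l1 > 0" and l2: "l2 > 0" and b: "b > 0" and C: "\<bar>a\<bar> \<le> C"
  shows "Ep l1 l2 a b (a - psi l1 l2 (l1 * a + l2 * ln b)) \<le> ennreal (l1 / 2 * (C + 1)^2) + ennreal l2 * ennreal b"
proof -
  define c where "c = min b 1"
  have c: "0 < c" "c \<le> 1" unfolding c_def using b by auto
  have "Ep l1 l2 a b (a - psi l1 l2 (l1 * a + l2 * ln b)) \<le> Ep l1 l2 a b (a - c)"
    using Ep_key2[OF l1 l2 b, of "a - c"] c by simp
  also have "\<dots> = ennreal (l1 / 2 * (a - c)^2) + ennreal l2 * kl_pt c b"
    by (simp add: Ep_def)
  also have "\<dots> \<le> ennreal (l1 / 2 * (C + 1)^2) + ennreal l2 * ennreal b"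
  proof -
    have "\<bar>a - c\<bar> \<le> C + 1" using C c by linarith
    hence "(a - c)^2 \<le> (C + 1)^2"
      by (metis abs_ge_zero abs_le_square_iff le_less_trans linorder_not_le order.trans abs_of_nonneg power2_abs)
    hence 1: "ennreal (l1 / 2 * (a - c)^2) \<le> ennreal (l1 / 2 * (C + 1)^2)" using l1 by (intro ennreal_leI) simp
    have "klr c b \<le> b"
    proof (cases "b \<le> 1")
      case True thus ?thesis using b unfolding c_def klr_def by simp
    next
      case False
      hence "c = 1" unfolding c_def by simp
      moreover have "ln (1 / b) \<le> 0" using False by (simp add: ln_div)
      ultimately show ?thesis unfolding klr_def by simp
    qed
    hence "kl_pt c b \<le> ennreal b" using kl_pt_eq[of c b] c b by (simp add: ennreal_leI)
    hence 2: "ennreal l2 * kl_pt c b \<le> ennreal l2 * ennreal b" by (rule mult_left_mono) simp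
    show ?thesis using add_mono[OF 1 2] .
  qed
  finally show ?thesis .
qed


lemma obj_eq:
  assumes l1: "lam1 > 0" and l2: "lam2 > 0"
    and [measurable]: "f \<in> borel_measurable (lebesgue_on \<Omega>)" "u \<in> borel_measurable (lebesgue_on \<Omega>)"
    and g: "Lp2 \<Omega> g"
  shows "objective \<Omega> f u lam1 lam2 g = (\<integral>\<^sup>+ x. Ep lam1 lam2 (f x) (u x) (g x) \<partial>lebesgue_on \<Omega>)"
proof -
  let ?M = "lebesgue_on \<Omega>"
  have [measurable]: "g \<in> borel_measurable ?M" and gi: "integrable ?M (\<lambda>x. (g x)^2)"
    using g by (auto simp: Lp2_def)
  have "ennreal (lam1 / 2 * integral\<^sup>L ?M (\<lambda>x. (g x)^2)) = ennreal (integral\<^sup>L ?M (\<lambda>x. lam1 / 2 * (g x)^2))"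
    by simp
  also have "\<dots> = (\<integral>\<^sup>+ x. ennreal (lam1 / 2 * (g x)^2) \<partial>?M)"
    by (rule nn_integral_eq_integral[symmetric]) (use gi l1 in auto)
  finally have 1: "ennreal (lam1 / 2 * integral\<^sup>L ?M (\<lambda>x. (g x)^2)) = (\<integral>\<^sup>+ x. ennreal (lam1 / 2 * (g x)^2) \<partial>?M)" .
  have 2: "ennreal lam2 * D_KL \<Omega> (\<lambda>x. f x - g x) u = (\<integral>\<^sup>+ x. ennreal lam2 * kl_pt (f x - g x) (u x) \<partial>?M)"
    unfolding D_KL_def by (rule nn_integral_cmult[symmetric]) measurable
  show ?thesis unfolding objective_def 1 2 Ep_def
    by (rule nn_integral_add[symmetric]) measurable
qed

theorem proposition2p2:
  fixes \<Omega> :: "(real^2) set" and f u :: "real^2 \<Rightarrow> real" and lam1 lam2 :: real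
  assumes "open \<Omega>" and "bounded \<Omega>" and "lipschitz_boundary \<Omega>"
    and "Linfty \<Omega> f" and "lam1 > 0" and "lam2 > 0"
    and "BV \<Omega> u" and "A_class \<Omega> u"
  shows "\<exists>v. B_class \<Omega> f v
            \<and> (\<forall>w. B_class \<Omega> f w \<longrightarrow> objective \<Omega> f u lam1 lam2 v \<le> objective \<Omega> f u lam1 lam2 w)
            \<and> (\<forall>v'. B_class \<Omega> f v'
                 \<and> (\<forall>w. B_class \<Omega> f w \<longrightarrow> objective \<Omega> f u lam1 lam2 v' \<le> objective \<Omega> f u lam1 lam2 w)
                 \<longrightarrow> (AE x in lebesgue_on \<Omega>. v' x = v x))"
proof -
  let ?M = "lebesgue_on \<Omega>"
  note l1 = \<open>lam1 > 0\<close> and l2 = \<open>lam2 > 0\<close>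
  have [measurable]: "f \<in> borel_measurable ?M" using assms(4) by (simp add: Linfty_def)
  obtain C where C: "AE x in ?M. \<bar>f x\<bar> \<le> C" using assms(4) by (auto simp: Linfty_def)
  have ui: "integrable ?M u" and upos: "AE x in ?M. u x > 0" using assms(8) by (auto simp: A_class_def)
  have [measurable]: "u \<in> borel_measurable ?M" using ui by auto
  have [measurable]: "psi lam1 lam2 \<in> borel_measurable borel" using psi_meas[OF l1 l2] .
  define vs where "vs x = f x - psi lam1 lam2 (lam1 * f x + lam2 * ln (u x))" for x
  have [measurable]: "vs \<in> borel_measurable ?M" unfolding vs_def by measurable
  have vsf: "vs x \<le> f x" for x unfolding vs_def using psi_prop[OF l1 l2] by (simp add: less_imp_le)
  define E where "E g x = Ep lam1 lam2 (f x) (u x) (g x)" for g x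
  have Em[measurable]: "(\<lambda>x. E g x) \<in> borel_measurable ?M" if [measurable]: "g \<in> borel_measurable ?M" for g
    unfolding E_def Ep_def by measurable
  have fm: "finite_measure ?M" by (rule finite_measure_lebesgue_on) (rule lmeas[OF assms(1,2)])
  define K where "K = ennreal (lam1 / 2 * (C + 1)^2)"
  have "(\<integral>\<^sup>+ x. E vs x \<partial>?M) \<le> (\<integral>\<^sup>+ x. K + ennreal lam2 * ennreal (u x) \<partial>?M)"
  proof (rule nn_integral_mono_AE)
    show "AE x in ?M. E vs x \<le> K + ennreal lam2 * ennreal (u x)"
      using C upos
    proof eventually_elim
      case (elim x)
      show ?case unfolding E_def K_def vs_def using Ep_bound[OF l1 l2 elim(2) elim(1)] .
    qed
  qed
  also have "\<dots> = K * emeasure ?M (space ?M) + ennreal lam2 * (\<integral>\<^sup>+ x. ennreal (u x) \<partial>?M)"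
    by (subst nn_integral_add) (auto simp: nn_integral_cmult)
  also have "\<dots> < \<infinity>"
  proof -
    have "emeasure ?M (space ?M) < \<infinity>" using finite_measure.emeasure_finite[OF fm] by (simp add: top.not_eq_extremum)
    moreover have "(\<integral>\<^sup>+ x. ennreal (u x) \<partial>?M) < \<infinity>"
    proof -
      have "(\<integral>\<^sup>+ x. ennreal (u x) \<partial>?M) \<le> (\<integral>\<^sup>+ x. ennreal (norm (u x)) \<partial>?M)"
        by (rule nn_integral_mono) (simp add: ennreal_leI)
      also have "\<dots> < \<infinity>" using ui unfolding integrable_iff_bounded by blast
      finally show ?thesis .
    qed
    ultimately show ?thesis unfolding K_def
      by (simp add: ennreal_mult_less_top ennreal_mult_eq_top_iff)
  qed
  finally have Efin: "(\<integral>\<^sup>+ x. E vs x \<partial>?M) < \<infinity>" .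
  have vsL2: "Lp2 \<Omega> vs" unfolding Lp2_def
  proof (intro conjI)
    show "vs \<in> borel_measurable ?M" by measurable
    show "integrable ?M (\<lambda>x. (vs x)^2)"
    proof (rule integrableI_bounded)
      show "(\<lambda>x. (vs x)^2) \<in> borel_measurable ?M" by measurable
      have "(\<integral>\<^sup>+ x. ennreal (norm ((vs x)^2)) \<partial>?M) \<le> (\<integral>\<^sup>+ x. ennreal (2 / lam1) * E vs x \<partial>?M)"
      proof (rule nn_integral_mono)
        fix x
        have "ennreal (norm ((vs x)^2)) = ennreal (2 / lam1) * ennreal (lam1 / 2 * (vs x)^2)"
          using l1 by (simp add: ennreal_mult[symmetric])
        also have "\<dots> \<le> ennreal (2 / lam1) * E vs x"
          unfolding E_def Ep_def by (rule mult_left_mono) simp_all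
        finally show "ennreal (norm ((vs x)^2)) \<le> ennreal (2 / lam1) * E vs x" .
      qed
      also have "\<dots> = ennreal (2 / lam1) * (\<integral>\<^sup>+ x. E vs x \<partial>?M)"
        by (rule nn_integral_cmult) measurable
      also have "\<dots> < \<infinity>" using Efin by (simp add: ennreal_mult_less_top)
      finally show "(\<integral>\<^sup>+ x. ennreal (norm ((vs x)^2)) \<partial>?M) < \<infinity>" .
    qed
  qed
  have Bvs: "B_class \<Omega> f vs" unfolding B_class_def using vsL2 vsf by simp
  have objE: "objective \<Omega> f u lam1 lam2 g = (\<integral>\<^sup>+ x. E g x \<partial>?M)" if "Lp2 \<Omega> g" for g
    unfolding E_def by (rule obj_eq[OF l1 l2 _ _ that]) measurable
  have keyAE: "AE x in ?M. E vs x + ennreal (lam1 / 2 * (g x - vs x)^2) \<le> E g x" if "B_class \<Omega> f g" for g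
  proof -
    have "AE x in ?M. g x \<le> f x" using that by (simp add: B_class_def)
    with upos show ?thesis
    proof eventually_elim
      case (elim x)
      show ?case unfolding E_def vs_def using Ep_key[OF l1 l2 elim(1) elim(2)] .
    qed
  qed
  have minimal: "objective \<Omega> f u lam1 lam2 vs \<le> objective \<Omega> f u lam1 lam2 w" if w: "B_class \<Omega> f w" for w
  proof -
    have "(\<integral>\<^sup>+ x. E vs x \<partial>?M) \<le> (\<integral>\<^sup>+ x. E w x \<partial>?M)"
      by (rule nn_integral_mono_AE) (use keyAE[OF w] in \<open>auto elim: eventually_mono intro: order.trans[OF add_increasing2[OF zero_le order_refl]]\<close>)
    thus ?thesis using objE vsL2 w by (simp add: B_class_def)
  qed
  show ?thesis
  proof (intro exI[of _ vs] conjI allI impI)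
    show "B_class \<Omega> f vs" by (rule Bvs)
    show "objective \<Omega> f u lam1 lam2 vs \<le> objective \<Omega> f u lam1 lam2 w" if "B_class \<Omega> f w" for w
      using minimal[OF that] .
  next
    fix v' assume H: "B_class \<Omega> f v' \<and> (\<forall>w. B_class \<Omega> f w \<longrightarrow> objective \<Omega> f u lam1 lam2 v' \<le> objective \<Omega> f u lam1 lam2 w)"
    hence B': "B_class \<Omega> f v'" and le: "objective \<Omega> f u lam1 lam2 v' \<le> objective \<Omega> f u lam1 lam2 vs"
      using Bvs by auto
    have [measurable]: "v' \<in> borel_measurable ?M" using B' by (simp add: B_class_def Lp2_def)
    have "(\<integral>\<^sup>+ x. E vs x \<partial>?M) + (\<integral>\<^sup>+ x. ennreal (lam1 / 2 * (v' x - vs x)^2) \<partial>?M)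
        = (\<integral>\<^sup>+ x. E vs x + ennreal (lam1 / 2 * (v' x - vs x)^2) \<partial>?M)"
      by (rule nn_integral_add[symmetric]) measurable
    also have "\<dots> \<le> (\<integral>\<^sup>+ x. E v' x \<partial>?M)"
      by (rule nn_integral_mono_AE) (rule keyAE[OF B'])
    also have "\<dots> \<le> (\<integral>\<^sup>+ x. E vs x \<partial>?M)"
      using le objE vsL2 B' by (simp add: B_class_def)
    finally have "(\<integral>\<^sup>+ x. E vs x \<partial>?M) + (\<integral>\<^sup>+ x. ennreal (lam1 / 2 * (v' x - vs x)^2) \<partial>?M)
        \<le> (\<integral>\<^sup>+ x. E vs x \<partial>?M) + 0" by simp
    hence "(\<integral>\<^sup>+ x. ennreal (lam1 / 2 * (v' x - vs x)^2) \<partial>?M) = 0"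
      using Efin by (auto simp add: ennreal_add_left_cancel_le)
    hence "AE x in ?M. ennreal (lam1 / 2 * (v' x - vs x)^2) = 0"
      by (subst (asm) nn_integral_0_iff_AE) measurable
    thus "AE x in ?M. v' x = vs x"
    proof eventually_elim
      case (elim x)
      hence "lam1 / 2 * (v' x - vs x)^2 \<le> 0" by (simp only: ennreal_eq_0_iff)
      hence "(v' x - vs x)^2 \<le> 0" using l1 by (simp add: mult_le_0_iff)
      thus ?case by simp
    qed
  qed
qed

end
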